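(* Let $\phi$ be a function of cubic type (see context), let $T>0$, $Q_T=\mathbb{R}\times(0,T)$, and let $u_0\in L^\infty(\mathbb{R})$ satisfy: $\phi(u_0)\in C(\mathbb{R})$, $\phi(u_0)\in C^1((-\infty,0))\cap C^1((0,\infty))$, $\phi(u_0)'\in L^1((-\infty,0))\cap L^1((0,\infty))$, and $u_0(x)\in(b,c)$ for $x\in(-\infty,0)$, $u_0(x)\in[c,\infty)$ for $x\in(0,\infty)$. Let $(u,v,\xi)$ be a two-phase solution (in the sense described in the context) of $u_t=\phi(u)_{xx}$ in $Q_T$, $u(\cdot,0)=u_0$, with $u=\beta_0(v)$ in $V_1$ and $u=\beta_2(v)$ in $V_2$. If $(t_1,t_2)\subset(0,T)$ and $v(\xi(t),t)>A$ for all $t\in(t_1,t_2)$, then $\xi'(t)\le 0$ for all $t\in(t_1,t_2)$.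
   Context: Cubic-type $\phi$: $\phi\in \mathrm{Lip}_{loc}(\mathbb{R})$, $\lim_{u\to\pm\infty}\phi(u)=\pm\infty$, $\phi$ has a local maximum $B=\phi(b)$ and a local minimum $A=\phi(c)$ with $b<c$, $A<B$, $\phi$ is increasing on $(-\infty,b)$ and on $(c,\infty)$ and decreasing on $(b,c)$. Let $\beta_1,\beta_0,\beta_2$ be the inverses of the restrictions of $\phi$ to $(-\infty,b]$, $[b,c]$, $[c,\infty)$ respectively. Two-phase solution: a triple $(u,v,\xi)$ with (i) $u\in L^\infty(Q_T)$, $v\in L^2((0,T);H^1_{loc}(\mathbb{R}))$, $v\in C(\overline V_1)\cap C(\overline V_2)$, $v_x\in L^\infty((0,T);L^1(\mathbb{R}))$, $\xi\in C^1([0,T])$, $\xi(0)=0$, $t\mapsto v(\xi(t),t)$ continuous on $[0,T]$, and $\lim_{\delta\to0^+}v(\xi(t)+\delta,t)=\lim_{\delta\to0^-}v(\xi(t)+\delta,t)$ for every $t\in(0,T)$, where $V_1=\{(x,t): x<\xi(t),\ t\in(0,T)\}$, $V_2=\{(x,t): x>\xi(t),\ t\in(0,T)\}$; (ii) $u=\beta_0(v)$ in $V_1$, $u=\beta_2(v)$ in $V_2$ (so $v=\phi(u)$); (iii) $\iint_{Q_T}(u\psi_t-v_x\psi_x)\,dxdt+\int_{\mathbb{R}}u_0(x)\psi(x,0)\,dx=0$ for all $\psi\in C^1(\overline Q_T)$ with $\psi(\cdot,T)=0$ (and suitable decay so the integrals make sense); (iv) entropy inequality: $\iint_{Q_T}\{G(u)\psi_t-g(v)v_x\psi_x-g'(v)|v_x|^2\psi\}\,dxdt\ge0$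 for all $\psi\in C_0^\infty(Q_T)$, $\psi\ge0$, and all $g\in C^1(\mathbb{R})$ with $g'\ge0$, where $G(u)=\int_k^u g(\phi(s))\,ds$ for a fixed $k\in\mathbb{R}$. *)

theory Defs
  imports "HOL-Analysis.Analysis"
begin

definition cubic_type :: "(real \<Rightarrow> real) \<Rightarrow> real \<Rightarrow> real \<Rightarrow> bool" where
  "cubic_type phi b c \<longleftrightarrow>
     (\<forall>K. compact K \<longrightarrow> (\<exists>L. L-lipschitz_on K phi)) \<and>
     filterlim phi at_top at_top \<and> filterlim phi at_bot at_bot \<and>
     b < c \<and>
     strict_mono_on {..b} phi \<and>
     strict_antimono_on {b..c} phi \<and>
     strict_mono_on {c..} phi"

definition beta0 :: "(real \<Rightarrow> real) \<Rightarrow> real \<Rightarrow> real \<Rightarrow> real \<Rightarrow> real" where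
  "beta0 phi b c = the_inv_into {b..c} phi"

definition beta2 :: "(real \<Rightarrow> real) \<Rightarrow> real \<Rightarrow> real \<Rightarrow> real" where
  "beta2 phi c = the_inv_into {c..} phi"

definition is_partials ::
  "(real \<times> real \<Rightarrow> real) \<Rightarrow> (real \<times> real \<Rightarrow> real) \<Rightarrow> (real \<times> real \<Rightarrow> real) \<Rightarrow> bool" where
  "is_partials f fx ft \<longleftrightarrow>
     (\<forall>x t. ((\<lambda>y. f (y, t)) has_real_derivative fx (x, t)) (at x) \<and>
            ((\<lambda>s. f (x, s)) has_real_derivative ft (x, t)) (at t))"

primrec C_k :: "nat \<Rightarrow> (real \<times> real \<Rightarrow> real) \<Rightarrow> bool" where
  "C_k 0 f = continuous_on UNIV f"
| "C_k (Suc k) f = (\<exists>fx ft. is_partials f fx ft \<and> C_k k f \<and> C_k k fx \<and> C_k k ft)"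

definition C_inf :: "(real \<times> real \<Rightarrow> real) \<Rightarrow> bool" where
  "C_inf f \<longleftrightarrow> (\<forall>k. C_k k f)"

definition Q :: "real \<Rightarrow> (real \<times> real) set" where
  "Q T = UNIV \<times> {0<..<T}"

definition test_fun :: "real \<Rightarrow> (real \<times> real \<Rightarrow> real) \<Rightarrow> bool" where
  "test_fun T psi \<longleftrightarrow> C_inf psi \<and>
     (\<exists>K. compact K \<and> K \<subseteq> Q T \<and> (\<forall>p. p \<notin> K \<longrightarrow> psi p = 0))"

definition V1 :: "real \<Rightarrow> (real \<Rightarrow> real) \<Rightarrow> (real \<times> real) set" where
  "V1 T xi = {(x, t). x < xi t \<and> 0 < t \<and> t < T}"

definition V2 :: "real \<Rightarrow> (real \<Rightarrow> real) \<Rightarrow> (real \<times> real) set" where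
  "V2 T xi = {(x, t). x > xi t \<and> 0 < t \<and> t < T}"

definition Linf_Q :: "real \<Rightarrow> (real \<times> real \<Rightarrow> real) \<Rightarrow> bool" where
  "Linf_Q T u \<longleftrightarrow> set_borel_measurable lborel (Q T) u \<and>
     (\<exists>M. AE p in lborel. p \<in> Q T \<longrightarrow> \<bar>u p\<bar> \<le> M)"

definition Linf_R :: "(real \<Rightarrow> real) \<Rightarrow> bool" where
  "Linf_R f \<longleftrightarrow> f \<in> borel_measurable lborel \<and> (\<exists>M. AE x in lborel. \<bar>f x\<bar> \<le> M)"

text \<open>vx is the weak x-derivative of v, and v belongs to L^2((0,T); H^1_loc(R)),
  v_x belongs to L^infinity((0,T); L^1(R)).\<close>
definition weak_regularity ::
  "real \<Rightarrow> (real \<times> real \<Rightarrow> real) \<Rightarrow> (real \<times> real \<Rightarrow> real) \<Rightarrow> bool" where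
  "weak_regularity T v vx \<longleftrightarrow>
     set_borel_measurable lborel (Q T) v \<and> set_borel_measurable lborel (Q T) vx \<and>
     (\<forall>R. set_integrable lborel ({-R..R} \<times> {0<..<T}) (\<lambda>p. (v p)\<^sup>2) \<and>
          set_integrable lborel ({-R..R} \<times> {0<..<T}) (\<lambda>p. (vx p)\<^sup>2)) \<and>
     (\<forall>psi psix psit. test_fun T psi \<and> is_partials psi psix psit \<longrightarrow>
        (LINT p:Q T|lborel. v p * psix p) = - (LINT p:Q T|lborel. vx p * psi p)) \<and>
     (\<exists>M. AE t in lborel. t \<in> {0<..<T} \<longrightarrow>
        integrable lborel (\<lambda>x. vx (x, t)) \<and> (LINT x|lborel. \<bar>vx (x, t)\<bar>) \<le> M)"

definition two_phase_solution ::
  "(real \<Rightarrow> real) \<Rightarrow> real \<Rightarrow> real \<Rightarrow> real \<Rightarrow> (real \<Rightarrow> real) \<Rightarrow>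
   (real \<times> real \<Rightarrow> real) \<Rightarrow> (real \<times> real \<Rightarrow> real) \<Rightarrow> (real \<Rightarrow> real) \<Rightarrow> bool" where
  "two_phase_solution phi b c T u0 u v xi \<longleftrightarrow>
     (\<exists>vx.
       \<comment> \<open>(i) regularity\<close>
       Linf_Q T u \<and> weak_regularity T v vx \<and>
       (\<exists>w1. continuous_on (closure (V1 T xi)) w1 \<and> (\<forall>p\<in>V1 T xi. w1 p = v p)) \<and>
       (\<exists>w2. continuous_on (closure (V2 T xi)) w2 \<and> (\<forall>p\<in>V2 T xi. w2 p = v p)) \<and>
       (\<exists>dxi. (\<forall>t\<in>{0..T}. (xi has_real_derivative dxi t) (at t within {0..T})) \<and>
              continuous_on {0..T} dxi) \<and>
       xi 0 = 0 \<and>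
       continuous_on {0..T} (\<lambda>t. v (xi t, t)) \<and>
       (\<forall>t\<in>{0<..<T}. ((\<lambda>d. v (xi t + d, t)) \<longlongrightarrow> v (xi t, t)) (at_right 0) \<and>
                      ((\<lambda>d. v (xi t + d, t)) \<longlongrightarrow> v (xi t, t)) (at_left 0)) \<and>
       \<comment> \<open>(ii) phase conditions\<close>
       (AE p in lborel. p \<in> V1 T xi \<longrightarrow>
          v p \<in> {phi c..phi b} \<and> u p = beta0 phi b c (v p)) \<and>
       (AE p in lborel. p \<in> V2 T xi \<longrightarrow>
          v p \<ge> phi c \<and> u p = beta2 phi c (v p)) \<and>
       \<comment> \<open>(iii) weak formulation\<close>
       (\<forall>psi psix psit R. C_k 1 psi \<and> is_partials psi psix psit \<and>
           (\<forall>x. psi (x, T) = 0) \<and> (\<forall>x t. \<bar>x\<bar> \<ge> R \<longrightarrow> psi (x, t) = 0) \<longrightarrow>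
          (LINT p:Q T|lborel. u p * psit p - vx p * psix p)
            + (LINT x|lborel. u0 x * psi (x, 0)) = 0) \<and>
       \<comment> \<open>(iv) entropy inequality, with G(u) = integral from k = 0 to u of g(phi s)\<close>
       (\<forall>psi psix psit g dg. test_fun T psi \<and> is_partials psi psix psit \<and>
           (\<forall>p. psi p \<ge> 0) \<and>
           (\<forall>y. (g has_real_derivative dg y) (at y)) \<and> continuous_on UNIV dg \<and>
           (\<forall>y. dg y \<ge> 0) \<longrightarrow>
          (LINT p:Q T|lborel. (LBINT s=0..u p. g (phi s)) * psit p
               - g (v p) * vx p * psix p - dg (v p) * (vx p)\<^sup>2 * psi p) \<ge> 0))"

end

theory Submission
  imports Defs "HOL-Computational_Algebra.Polynomial"
begin

fun Cn :: "nat \<Rightarrow> (real \<Rightarrow> real) \<Rightarrow> bool" where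
  "Cn 0 f = True"
| "Cn (Suc n) f = ((\<forall>x. (f has_real_derivative deriv f x) (at x)) \<and> Cn n (deriv f))"

definition smooth1 :: "(real \<Rightarrow> real) \<Rightarrow> bool" where
  "smooth1 f \<longleftrightarrow> (\<forall>n. Cn n f)"

lemma Cn_mono: "Cn (Suc n) f \<Longrightarrow> Cn n f"
  by (induction n arbitrary: f) auto

lemma Cn_cong: "Cn n f \<Longrightarrow> (\<And>x. f x = g x) \<Longrightarrow> Cn n g"
proof -
  assume "Cn n f" "\<And>x. f x = g x"
  then have "f = g" by auto
  with \<open>Cn n f\<close> show ?thesis by simp
qed

lemma Cn_const: "Cn n (\<lambda>x. k)"
proof (induction n arbitrary: k)
  case (Suc n)
  have d: "deriv (\<lambda>x. k) = (\<lambda>x. 0)" by (rule ext) simp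
  show ?case using Suc by (simp add: d)
qed simp

lemma Cn_add: "Cn n f \<Longrightarrow> Cn n g \<Longrightarrow> Cn n (\<lambda>x. f x + g x)"
proof (induction n arbitrary: f g)
  case (Suc n)
  then have df: "\<And>x. (f has_real_derivative deriv f x) (at x)"
    and dg: "\<And>x. (g has_real_derivative deriv g x) (at x)" by auto
  have D: "\<And>x. ((\<lambda>x. f x + g x) has_real_derivative deriv f x + deriv g x) (at x)"
    using df dg by (intro DERIV_add)
  then have d: "deriv (\<lambda>x. f x + g x) = (\<lambda>x. deriv f x + deriv g x)"
    by (intro ext DERIV_imp_deriv)
  show ?case using Suc D by (simp add: d)
qed simp

lemma Cn_mult: "Cn n f \<Longrightarrow> Cn n g \<Longrightarrow> Cn n (\<lambda>x. f x * g x)"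
proof (induction n arbitrary: f g)
  case (Suc n)
  then have df: "\<And>x. (f has_real_derivative deriv f x) (at x)"
    and dg: "\<And>x. (g has_real_derivative deriv g x) (at x)" by auto
  have D: "\<And>x. ((\<lambda>x. f x * g x) has_real_derivative deriv f x * g x + f x * deriv g x) (at x)"
    using df dg by (intro derivative_eq_intros) auto
  then have d: "deriv (\<lambda>x. f x * g x) = (\<lambda>x. deriv f x * g x + f x * deriv g x)"
    by (intro ext DERIV_imp_deriv)
  have "Cn n (\<lambda>x. deriv f x * g x)" using Suc Cn_mono by auto
  moreover have "Cn n (\<lambda>x. f x * deriv g x)" using Suc Cn_mono by auto
  ultimately show ?case using Suc D by (simp add: d Cn_add)
qed simp

lemma Cn_affine: "Cn n f \<Longrightarrow> Cn n (\<lambda>x. f (a * x + k))"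
proof (induction n arbitrary: f)
  case (Suc n)
  then have df: "\<And>x. (f has_real_derivative deriv f x) (at x)" by auto
  have D: "\<And>x. ((\<lambda>x. f (a * x + k)) has_real_derivative deriv f (a * x + k) * a) (at x)"
    using df by (intro derivative_eq_intros DERIV_chain2[OF df]) auto
  then have d: "deriv (\<lambda>x. f (a * x + k)) = (\<lambda>x. deriv f (a * x + k) * a)"
    by (intro ext DERIV_imp_deriv)
  have "Cn n (\<lambda>x. deriv f (a * x + k) * a)"
    using Suc by (intro Cn_mult Cn_const) auto
  then show ?case using Suc D by (simp add: d)
qed simp

definition hP :: "real poly \<Rightarrow> real \<Rightarrow> real" where
  "hP P y = (if 0 < y then poly P (1 / y) * exp (- (1 / y)) else 0)"

lemma poly_exp_lim: "((\<lambda>z::real. poly (P::real poly) z * exp (- z)) \<longlongrightarrow> 0) at_top"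
proof -
  have "((\<lambda>z. \<Sum>i\<le>degree P. coeff P i * (z ^ i / exp z)) \<longlongrightarrow> (\<Sum>i\<le>degree P. coeff P i * 0)) at_top"
    by (intro tendsto_sum tendsto_mult tendsto_const tendsto_power_div_exp_0)
  moreover have "\<And>z. (\<Sum>i\<le>degree P. coeff P i * (z ^ i / exp z)) = poly P z * exp (- z)"
  proof -
    fix z :: real
    have "(\<Sum>i\<le>degree P. coeff P i * (z ^ i / exp z)) = (\<Sum>i\<le>degree P. coeff P i * z ^ i) / exp z"
      by (simp add: sum_divide_distrib)
    also have "\<dots> = poly P z * exp (- z)" by (simp add: poly_altdef exp_minus divide_inverse)
    finally show "(\<Sum>i\<le>degree P. coeff P i * (z ^ i / exp z)) = poly P z * exp (- z)" .
  qed
  ultimately show ?thesis by simp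
qed

lemma hP_deriv0: "(hP P has_real_derivative 0) (at 0)"
proof -
  have R: "((\<lambda>y. (hP P y - hP P 0) / (y - 0)) \<longlongrightarrow> 0) (at_right 0)"
  proof -
    have "((\<lambda>y. poly (pCons 0 P) (inverse y) * exp (- inverse y)) \<longlongrightarrow> 0) (at_right 0)"
      using filterlim_compose[OF poly_exp_lim[of "pCons 0 P"] filterlim_inverse_at_top_right] by (simp add: o_def)
    moreover have "\<forall>\<^sub>F y in at_right (0::real). poly (pCons 0 P) (inverse y) * exp (- inverse y) = (hP P y - hP P 0) / (y - 0)"
      by (auto simp: hP_def divide_inverse ac_simps intro!: eventually_mono[OF eventually_at_right_less])
    ultimately show ?thesis
      by (rule Lim_transform_eventually)
  qed
  have L: "((\<lambda>y. (hP P y - hP P 0) / (y - 0)) \<longlongrightarrow> 0) (at_left 0)"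
  proof -
    have "\<forall>\<^sub>F y in at_left (0::real). 0 = (hP P y - hP P 0) / (y - 0)"
    proof -
      have "eventually (\<lambda>x. x \<in> {-1<..<0}) (at_left (0::real))" by (rule eventually_at_left_real) simp
      then show ?thesis by eventually_elim (auto simp: hP_def)
    qed
    then show ?thesis by (rule Lim_transform_eventually[OF tendsto_const])
  qed
  show ?thesis
    unfolding has_field_derivative_iff using filterlim_split_at[OF L R] by simp
qed

lemma hP_deriv:
  "(hP P has_real_derivative hP ([:0,0,1:] * (P - pderiv P)) x) (at x)"
proof (cases "x = 0")
  case True
  then show ?thesis using hP_deriv0[of P] by (simp add: hP_def)
next
  case False
  show ?thesis
  proof (cases "x > 0")
    case True
    have "((\<lambda>y. poly P (1 / y) * exp (- (1 / y))) has_real_derivative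
       poly (pderiv P) (1/x) * (- (1 / x^2)) * exp (- (1 / x)) + poly P (1/x) * (exp (- (1 / x)) * (1 / x^2))) (at x)"
      using True
      by (auto intro!: derivative_eq_intros DERIV_chain2[OF poly_DERIV] simp: power2_eq_square field_simps)
    then have "((\<lambda>y. poly P (1 / y) * exp (- (1 / y))) has_real_derivative
       hP ([:0,0,1:] * (P - pderiv P)) x) (at x)"
      using True by (simp add: hP_def field_simps power2_eq_square poly_diff)
    then show ?thesis
      by (rule has_field_derivative_transform_within_open[where S="{0<..}"]) (use True in \<open>auto simp: hP_def\<close>)
  next
    case False
    with \<open>x \<noteq> 0\<close> have "x < 0" by simp
    have "((\<lambda>y. 0) has_real_derivative 0) (at x)" by simp
    then have "((\<lambda>y. 0) has_real_derivative hP ([:0,0,1:] * (P - pderiv P)) x) (at x)"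
      using \<open>x < 0\<close> by (simp add: hP_def)
    then show ?thesis
      by (rule has_field_derivative_transform_within_open[where S="{..<0}"]) (use \<open>x<0\<close> in \<open>auto simp: hP_def\<close>)
  qed
qed

lemma Cn_hP: "Cn n (hP P)"
proof (induction n arbitrary: P)
  case (Suc n)
  have d: "deriv (hP P) = hP ([:0,0,1:] * (P - pderiv P))"
    by (intro ext DERIV_imp_deriv hP_deriv)
  show ?case using Suc hP_deriv by (simp add: d)
qed simp

definition hfun :: "real \<Rightarrow> real" where "hfun = hP 1"

lemma smooth_hfun: "smooth1 hfun"
  unfolding smooth1_def hfun_def using Cn_hP by blast

lemma hfun_pos: "y > 0 \<Longrightarrow> hfun y > 0" and hfun_zero: "y \<le> 0 \<Longrightarrow> hfun y = 0"
  and hfun_nonneg: "hfun y \<ge> 0"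
  by (auto simp: hfun_def hP_def)

lemma LB_cont:
  fixes f :: "real \<Rightarrow> real" and a w :: real
  assumes f: "continuous_on UNIV f"
  shows "continuous_on UNIV (\<lambda>w::real. LBINT s=0..w. f s)"
proof (rule continuous_at_imp_continuous_on, intro ballI)
  fix w :: real
  define R where "R = \<bar>w\<bar> + 1"
  have "((\<lambda>u. LBINT y=ereal 0..ereal u. f y) has_vector_derivative f w) (at w within {-R..R})"
    by (rule interval_integral_FTC2) (use f in \<open>auto simp: R_def intro: continuous_on_subset\<close>)
  then have "((\<lambda>u. LBINT y=0..u. f y) has_vector_derivative f w) (at w within {-R..R})"
    by (simp add: zero_ereal_def)
  moreover have "-R < w" "w < R" unfolding R_def by linarith+
  then have "w \<in> interior {-R..R}" by (simp only: interior_atLeastAtMost_real) simp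
  ultimately have "((\<lambda>u. LBINT y=0..u. f y) has_vector_derivative f w) (at w)"
    by (metis at_within_interior)
  then show "isCont (\<lambda>u::real. LBINT y=0..u. f y) w"
    by (rule has_vector_derivative_continuous)
qed

lemma LB_split:
  fixes f :: "real \<Rightarrow> real" and a w :: real
  assumes f: "continuous_on UNIV f"
  shows "(LBINT s=0..w. f s) = (LBINT s=0..a. f s) + (LBINT s=a..w. f s)"
proof -
  have "interval_lebesgue_integrable lborel (ereal (min 0 (min a w))) (ereal (max 0 (max a w))) f"
    by (rule interval_integrable_continuous_on) (use f in \<open>auto intro: continuous_on_subset\<close>)
  then have "(LBINT s=ereal 0..ereal a. f s) + (LBINT s=ereal a..ereal w. f s) = (LBINT s=ereal 0..ereal w. f s)"
    by (intro interval_integral_sum) (simp add: min_def max_def split: if_splits)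
  then show ?thesis by (simp add: zero_ereal_def)
qed

lemma LB_zero:
  fixes f :: "real \<Rightarrow> real" and a w :: real
  assumes "\<And>s. min a w \<le> s \<Longrightarrow> s \<le> max a w \<Longrightarrow> f s = 0"
  shows "(LBINT s=a..w. f s) = 0"
proof -
  have "(LBINT s=ereal a..ereal w. f s) = (LBINT s=ereal a..ereal w. 0)"
    by (rule interval_integral_cong) (auto simp: einterval_def intro!: assms simp: min_def max_def split: if_splits)
  then show ?thesis by simp
qed

lemma cubic_cont:
  assumes "cubic_type phi b c"
  shows "continuous_on UNIV phi"
proof (rule continuous_at_imp_continuous_on, intro ballI)
  fix x :: real
  obtain L where "L-lipschitz_on (cball x 1) phi"
    using assms unfolding cubic_type_def by (meson compact_cball)
  then have "continuous_on (cball x 1) phi" by (rule lipschitz_on_continuous_on)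
  then show "isCont phi x" by (rule continuous_on_interior) simp
qed

lemma smooth1_D: "smooth1 f \<Longrightarrow> (f has_real_derivative deriv f x) (at x)"
  unfolding smooth1_def by (metis Cn.simps(2))

lemma smooth1_deriv: "smooth1 f \<Longrightarrow> smooth1 (deriv f)"
  unfolding smooth1_def by (metis Cn.simps(2))

lemma smooth1_cont: "smooth1 f \<Longrightarrow> continuous_on UNIV f"
  by (rule continuous_at_imp_continuous_on) (auto intro: DERIV_isCont smooth1_D)

lemma smooth1_mult: "smooth1 f \<Longrightarrow> smooth1 g \<Longrightarrow> smooth1 (\<lambda>x. f x * g x)"
  unfolding smooth1_def using Cn_mult by blast

lemma smooth1_affine: "smooth1 f \<Longrightarrow> smooth1 (\<lambda>x. f (a * x + k))"
  unfolding smooth1_def using Cn_affine by blast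

definition bump :: "real \<Rightarrow> real \<Rightarrow> real \<Rightarrow> real" where
  "bump a b x = hfun (x - a) * hfun (b - x)"

lemma smooth_bump: "smooth1 (bump a b)"
proof -
  have "smooth1 (\<lambda>x. hfun (1 * x + (- a)) * hfun ((-1) * x + b))"
    by (intro smooth1_mult smooth1_affine smooth_hfun)
  then show ?thesis unfolding bump_def[abs_def] by simp
qed

lemma bump_pos: "a < x \<Longrightarrow> x < b \<Longrightarrow> bump a b x > 0"
  by (simp add: bump_def hfun_pos)

lemma bump_zero: "x \<le> a \<or> b \<le> x \<Longrightarrow> bump a b x = 0"
  by (auto simp: bump_def hfun_zero)

lemma bump_nonneg: "bump a b x \<ge> 0"
  by (simp add: bump_def hfun_nonneg)

lemma deriv_bump_zero: "x \<le> a \<or> b \<le> x \<Longrightarrow> deriv (bump a b) x = 0"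
proof -
  assume x: "x \<le> a \<or> b \<le> x"
  have D: "(bump a b has_real_derivative deriv (bump a b) x) (at x)"
    by (rule smooth1_D[OF smooth_bump])
  have M: "\<forall>y. \<bar>x - y\<bar> < 1 \<longrightarrow> bump a b x \<le> bump a b y"
    using bump_zero[OF x] bump_nonneg by simp
  show ?thesis using DERIV_local_min[OF D zero_less_one M] .
qed

lemma cont_fst_comp: "continuous_on UNIV f \<Longrightarrow> continuous_on UNIV (\<lambda>p::real\<times>real. f (fst p))"
  by (rule continuous_on_compose2[of UNIV f UNIV fst]) (auto intro: continuous_intros)

lemma cont_snd_comp: "continuous_on UNIV f \<Longrightarrow> continuous_on UNIV (\<lambda>p::real\<times>real. f (snd p))"
  by (rule continuous_on_compose2[of UNIV f UNIV snd]) (auto intro: continuous_intros)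

lemma C_k_prod: "smooth1 f \<Longrightarrow> smooth1 g \<Longrightarrow> C_k k (\<lambda>p. f (fst p) * g (snd p))"
proof (induction k arbitrary: f g)
  case 0
  then show ?case
    by (simp add: continuous_on_mult cont_fst_comp cont_snd_comp smooth1_cont)
next
  case (Suc k)
  have P: "is_partials (\<lambda>p. f (fst p) * g (snd p)) (\<lambda>p. deriv f (fst p) * g (snd p))
             (\<lambda>p. f (fst p) * deriv g (snd p))"
    unfolding is_partials_def
  proof (intro allI conjI)
    fix x t
    show "((\<lambda>y. f (fst (y, t)) * g (snd (y, t))) has_real_derivative deriv f (fst (x, t)) * g (snd (x, t))) (at x)"
      using smooth1_D[OF Suc.prems(1), of x] by (auto intro!: derivative_eq_intros)
    show "((\<lambda>s. f (fst (x, s)) * g (snd (x, s))) has_real_derivative f (fst (x, t)) * deriv g (snd (x, t))) (at t)"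
      using smooth1_D[OF Suc.prems(2), of t] by (auto intro!: derivative_eq_intros)
  qed
  show ?case
    using P Suc.IH[of f g] Suc.IH[of "deriv f" g] Suc.IH[of f "deriv g"] Suc.prems smooth1_deriv
    by auto
qed

lemma test_fun_prod:
  assumes "0 < s1" "s2 < T"
  shows "test_fun T (\<lambda>p. bump a1 a2 (fst p) * bump s1 s2 (snd p))"
  unfolding test_fun_def C_inf_def
proof (intro conjI allI exI[of _ "{a1..a2} \<times> {s1..s2}"])
  show "C_k k (\<lambda>p. bump a1 a2 (fst p) * bump s1 s2 (snd p))" for k
    by (intro C_k_prod smooth_bump)
  show "compact ({a1..a2} \<times> {s1..s2})" by (intro compact_Times) auto
  show "{a1..a2} \<times> {s1..s2} \<subseteq> Q T" using assms by (auto simp: Q_def)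
  show "p \<notin> {a1..a2} \<times> {s1..s2} \<longrightarrow> bump a1 a2 (fst p) * bump s1 s2 (snd p) = 0" for p
    by (cases p) (auto simp: bump_zero)
qed

lemma partials_prod:
  "is_partials (\<lambda>p. bump a1 a2 (fst p) * bump s1 s2 (snd p))
     (\<lambda>p. deriv (bump a1 a2) (fst p) * bump s1 s2 (snd p))
     (\<lambda>p. bump a1 a2 (fst p) * deriv (bump s1 s2) (snd p))"
  unfolding is_partials_def
proof (intro allI conjI)
  fix x t
  show "((\<lambda>y. bump a1 a2 (fst (y, t)) * bump s1 s2 (snd (y, t))) has_real_derivative deriv (bump a1 a2) (fst (x, t)) * bump s1 s2 (snd (x, t))) (at x)"
    using smooth1_D[OF smooth_bump, of a1 a2 x] by (auto intro!: derivative_eq_intros)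
  show "((\<lambda>s. bump a1 a2 (fst (x, s)) * bump s1 s2 (snd (x, s))) has_real_derivative bump a1 a2 (fst (x, t)) * deriv (bump s1 s2) (snd (x, t))) (at t)"
    using smooth1_D[OF smooth_bump, of s1 s2 t] by (auto intro!: derivative_eq_intros)
qed

lemma fubini_lborel:
  fixes h :: "real \<times> real \<Rightarrow> real"
  assumes "integrable lborel h"
  shows "integral\<^sup>L lborel h = (\<integral>s. (\<integral>x. h (x, s) \<partial>lborel) \<partial>lborel)"
proof -
  have "integrable (lborel \<Otimes>\<^sub>M lborel) (case_prod (\<lambda>x s. h (x, s)))"
    using assms by (simp add: lborel_prod)
  from lborel_pair.integral_snd[OF this]
  show ?thesis by (simp add: lborel_prod)
qed

lemma graph_null:
  fixes xc :: "real \<Rightarrow> real"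
  assumes "continuous_on UNIV xc"
  shows "{p::real\<times>real. fst p = xc (snd p)} \<in> null_sets lborel"
proof -
  let ?Z = "{p::real\<times>real. fst p = xc (snd p)}"
  have "closed ?Z"
    by (intro closed_Collect_eq continuous_intros cont_snd_comp assms)
  then have Zs0: "?Z \<in> sets (lborel::(real\<times>real) measure)" by simp
  then have Zs: "?Z \<in> sets (lborel \<Otimes>\<^sub>M lborel)"
    unfolding lborel_prod .
  have "emeasure (lborel \<Otimes>\<^sub>M lborel) ?Z = (\<integral>\<^sup>+y. emeasure lborel ((\<lambda>x. (x, y)) -` ?Z) \<partial>lborel)"
    by (rule lborel_pair.emeasure_pair_measure_alt2[OF Zs])
  also have "\<dots> = (\<integral>\<^sup>+y. 0 \<partial>lborel)"
  proof -
    have "\<And>y. (\<lambda>x. (x, y)) -` ?Z = {xc y}" by auto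
    then show ?thesis by simp
  qed
  finally have "emeasure lborel ?Z = 0" by (simp add: lborel_prod)
  with Zs0
   show ?thesis by auto
qed

lemma integrable_cont_compact:
  fixes f :: "'a::euclidean_space \<Rightarrow> real"
  assumes "continuous_on UNIV f" "compact K" "\<And>x. x \<notin> K \<Longrightarrow> f x = 0"
  shows "integrable lborel f"
proof -
  have "integrable lborel (\<lambda>x. indicator K x *\<^sub>R f x)"
    by (rule borel_integrable_compact[OF assms(2)]) (rule continuous_on_subset[OF assms(1)], simp)
  moreover have "(\<lambda>x. indicator K x *\<^sub>R f x) = f"
  proof
    fix x show "indicator K x *\<^sub>R f x = f x" using assms(3)[of x] by (cases "x \<in> K") auto
  qed
  ultimately show ?thesis by simp
qed

lemma integral_eq_LBINT:
  fixes f :: "real \<Rightarrow> real" and a b :: real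
  assumes "a \<le> b" "\<And>x. x \<notin> {a..b} \<Longrightarrow> f x = 0"
  shows "integral\<^sup>L lborel f = (LBINT x=a..b. f x)"
proof -
  have "(LBINT x=a..b. f x) = (LBINT x:{a..b}. f x)" by (rule interval_integral_Icc[OF assms(1)])
  also have "\<dots> = integral\<^sup>L lborel (\<lambda>x. indicator {a..b} x *\<^sub>R f x)"
    by (simp add: set_lebesgue_integral_def)
  also have "(\<lambda>x. indicator {a..b} x *\<^sub>R f x) = f"
  proof
    fix x show "indicator {a..b} x *\<^sub>R f x = f x" using assms(2)[of x] by (cases "x \<in> {a..b}") auto
  qed
  finally show ?thesis by simp
qed

lemma g_deriv:
  fixes m :: real
  shows "((\<lambda>y. - (max (m - y) 0)\<^sup>2) has_real_derivative 2 * max (m - y) 0) (at y)"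
proof -
  consider "y < m" | "y > m" | "y = m" by linarith
  then show ?thesis
  proof cases
    case 1
    have "((\<lambda>y. - (m - y)\<^sup>2) has_real_derivative 2 * (m - y)) (at y)"
      by (auto intro!: derivative_eq_intros simp: power2_eq_square)
    then have "((\<lambda>y. - (m - y)\<^sup>2) has_real_derivative 2 * max (m - y) 0) (at y)"
      using 1 by simp
    then show ?thesis
      by (rule has_field_derivative_transform_within_open[where S="{..<m}"]) (use 1 in auto)
  next
    case 2
    have "((\<lambda>y. 0) has_real_derivative 0) (at y)" by simp
    then have "((\<lambda>y. 0) has_real_derivative 2 * max (m - y) 0) (at y)" using 2 by simp
    then show ?thesis
      by (rule has_field_derivative_transform_within_open[where S="{m<..}"]) (use 2 in auto)
  next
    case 3
    have "((\<lambda>z. ((- (max (m - z) 0)\<^sup>2) - (- (max (m - m) 0)\<^sup>2)) / (z - m)) \<longlongrightarrow> 0) (at m)"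
    proof (rule Lim_null_comparison)
      show "\<forall>\<^sub>F z in at m. norm (((- (max (m - z) 0)\<^sup>2) - (- (max (m - m) 0)\<^sup>2)) / (z - m)) \<le> \<bar>z - m\<bar>"
      proof (rule eventuallyI)
        fix z :: real
        show "norm (((- (max (m - z) 0)\<^sup>2) - (- (max (m - m) 0)\<^sup>2)) / (z - m)) \<le> \<bar>z - m\<bar>"
        proof (cases "z < m")
          case True
          then have "((- (max (m - z) 0)\<^sup>2) - (- (max (m - m) 0)\<^sup>2)) / (z - m) = m - z"
            by (simp add: power2_eq_square field_simps)
          then show ?thesis using True by simp
        qed simp
      qed
      show "((\<lambda>z. \<bar>z - m\<bar>) \<longlongrightarrow> 0) (at m)"
        by (rule tendsto_eq_intros refl)+ simp
    qed
    then show ?thesis using 3 unfolding has_field_derivative_iff by simp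
  qed
qed

lemma cubic_props:
  assumes "cubic_type phi b c"
  shows "b < c"
    and "\<And>x y. b \<le> x \<Longrightarrow> x < y \<Longrightarrow> y \<le> c \<Longrightarrow> phi y < phi x"
    and "\<And>x y. c \<le> x \<Longrightarrow> x < y \<Longrightarrow> phi x < phi y"
    and "filterlim phi at_top at_top"
  using assms unfolding cubic_type_def monotone_on_def by auto

lemma cubic_large:
  assumes "cubic_type phi b c"
  obtains M where "M \<ge> c" "phi M \<ge> y"
proof -
  have "eventually (\<lambda>x. phi x \<ge> y) at_top"
    using cubic_props(4)[OF assms] by (simp add: filterlim_at_top)
  then obtain N where "\<And>x. x \<ge> N \<Longrightarrow> phi x \<ge> y" by (auto simp: eventually_at_top_linorder)
  then show ?thesis using that[of "max N c"] by simp
qed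

lemma beta0_prop:
  assumes phi: "cubic_type phi b c" and y: "y \<in> {phi c..phi b}"
  shows "beta0 phi b c y \<in> {b..c} \<and> phi (beta0 phi b c y) = y"
proof -
  have cont: "continuous_on UNIV phi" by (rule cubic_cont[OF phi])
  have inj: "inj_on phi {b..c}"
  proof (rule inj_onI)
    fix x z assume "x \<in> {b..c}" "z \<in> {b..c}" "phi x = phi z"
    then show "x = z" using cubic_props(2)[OF phi, of x z] cubic_props(2)[OF phi, of z x]
      by (cases x z rule: linorder_cases) auto
  qed
  have "\<exists>x. b \<le> x \<and> x \<le> c \<and> phi x = y"
    by (rule IVT2) (use y cubic_props(1)[OF phi] cont in \<open>auto simp: continuous_on_eq_continuous_at\<close>)
  then have "y \<in> phi ` {b..c}" by auto
  then show ?thesis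
    unfolding beta0_def using inj by (auto simp: the_inv_into_f_f)
qed

lemma beta2_prop:
  assumes phi: "cubic_type phi b c" and y: "y \<ge> phi c"
  shows "beta2 phi c y \<ge> c \<and> phi (beta2 phi c y) = y"
proof -
  have cont: "continuous_on UNIV phi" by (rule cubic_cont[OF phi])
  have inj: "inj_on phi {c..}"
  proof (rule inj_onI)
    fix x z assume "x \<in> {c..}" "z \<in> {c..}" "phi x = phi z"
    then show "x = z" using cubic_props(3)[OF phi, of x z] cubic_props(3)[OF phi, of z x]
      by (cases x z rule: linorder_cases) auto
  qed
  obtain M where M: "M \<ge> c" "phi M \<ge> y" using cubic_large[OF phi] by blast
  have "\<exists>x. c \<le> x \<and> x \<le> M \<and> phi x = y"
    by (rule IVT) (use y M cont in \<open>auto simp: continuous_on_eq_continuous_at\<close>)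
  then have "y \<in> phi ` {c..}" by auto
  then have "beta2 phi c y \<in> {c..} \<and> phi (beta2 phi c y) = y"
    unfolding beta2_def using inj by (auto simp: the_inv_into_f_f)
  then show ?thesis by simp
qed

lemma tps_dest:
  fixes phi :: "real \<Rightarrow> real" and b c T :: real and u0 :: "real \<Rightarrow> real"
    and u v :: "real \<times> real \<Rightarrow> real" and xi :: "real \<Rightarrow> real"
  assumes "two_phase_solution phi b c T u0 u v xi"
  obtains vx :: "real \<times> real \<Rightarrow> real" and w1 w2 :: "real \<times> real \<Rightarrow> real" and dxi :: "real \<Rightarrow> real"
    where "Linf_Q T u" "weak_regularity T v vx"
    "continuous_on (closure (V1 T xi)) w1" "\<forall>p\<in>V1 T xi. w1 p = v p"
    "continuous_on (closure (V2 T xi)) w2" "\<forall>p\<in>V2 T xi. w2 p = v p"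
    "\<forall>t\<in>{0..T}. (xi has_real_derivative dxi t) (at t within {0..T})"
    "continuous_on {0..T} dxi"
    "\<forall>t\<in>{0<..<T}. ((\<lambda>d. v (xi t + d, t)) \<longlongrightarrow> v (xi t, t)) (at_right 0) \<and>
                      ((\<lambda>d. v (xi t + d, t)) \<longlongrightarrow> v (xi t, t)) (at_left 0)"
    "AE p in lborel. p \<in> V1 T xi \<longrightarrow>
          v p \<in> {phi c..phi b} \<and> u p = beta0 phi b c (v p)"
    "AE p in lborel. p \<in> V2 T xi \<longrightarrow>
          v p \<ge> phi c \<and> u p = beta2 phi c (v p)"
    "\<forall>(psi::real\<times>real\<Rightarrow>real) (psix::real\<times>real\<Rightarrow>real) (psit::real\<times>real\<Rightarrow>real) (g::real\<Rightarrow>real) (dg::real\<Rightarrow>real). test_fun T psi \<and> is_partials psi psix psit \<and>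
           (\<forall>p. psi p \<ge> 0) \<and>
           (\<forall>y. (g has_real_derivative dg y) (at y)) \<and> continuous_on UNIV dg \<and>
           (\<forall>y. dg y \<ge> 0) \<longrightarrow>
          (LINT p:Q T|lborel. (LBINT s=0..u p. g (phi s)) * psit p
               - g (v p) * vx p * psix p - dg (v p) * (vx p)\<^sup>2 * psi p) \<ge> 0"
  using assms unfolding two_phase_solution_def apply (elim exE conjE) subgoal for vx w1 w2 dxi by (rule that[of vx w1 w2 dxi]) done

theorem proposition2p4:
  fixes phi :: "real \<Rightarrow> real" and b c T t1 t2 :: real
    and u0 :: "real \<Rightarrow> real"
    and u v :: "real \<times> real \<Rightarrow> real" and xi :: "real \<Rightarrow> real"
  assumes phi: "cubic_type phi b c"
    and T: "T > 0"
    and u0_Linf: "Linf_R u0"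
    and u0_cont: "continuous_on UNIV (\<lambda>x. phi (u0 x))"
    and u0_C1_neg: "(\<lambda>x. phi (u0 x)) C1_differentiable_on {..<0}"
    and u0_C1_pos: "(\<lambda>x. phi (u0 x)) C1_differentiable_on {0<..}"
    and u0_L1_neg: "set_integrable lborel {..<0} (deriv (\<lambda>x. phi (u0 x)))"
    and u0_L1_pos: "set_integrable lborel {0<..} (deriv (\<lambda>x. phi (u0 x)))"
    and u0_neg: "\<And>x. x < 0 \<Longrightarrow> u0 x \<in> {b<..<c}"
    and u0_pos: "\<And>x. x > 0 \<Longrightarrow> u0 x \<in> {c..}"
    and sol: "two_phase_solution phi b c T u0 u v xi"
    and t12: "0 \<le> t1" "t2 \<le> T"
    and above: "\<And>t. t \<in> {t1<..<t2} \<Longrightarrow> v (xi t, t) > phi c"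
  shows "\<forall>t\<in>{t1<..<t2}. deriv xi t \<le> 0"
proof
  obtain vx w1 w2 dxi where
    uL: "Linf_Q T u" and reg: "weak_regularity T v vx" and
    w1c: "continuous_on (closure (V1 T xi)) w1" and w1v': "\<forall>p\<in>V1 T xi. w1 p = v p" and
    w2c: "continuous_on (closure (V2 T xi)) w2" and w2v': "\<forall>p\<in>V2 T xi. w2 p = v p" and
    dxi': "\<forall>t\<in>{0..T}. (xi has_real_derivative dxi t) (at t within {0..T})" and
    dxic: "continuous_on {0..T} dxi" and
    lims: "\<forall>t\<in>{0<..<T}. ((\<lambda>d. v (xi t + d, t)) \<longlongrightarrow> v (xi t, t)) (at_right 0) \<and>
                      ((\<lambda>d. v (xi t + d, t)) \<longlongrightarrow> v (xi t, t)) (at_left 0)" and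
    ph1: "AE p in lborel. p \<in> V1 T xi \<longrightarrow>
          v p \<in> {phi c..phi b} \<and> u p = beta0 phi b c (v p)" and
    ph2: "AE p in lborel. p \<in> V2 T xi \<longrightarrow>
          v p \<ge> phi c \<and> u p = beta2 phi c (v p)" and
    ent: "\<forall>(psi::real\<times>real\<Rightarrow>real) (psix::real\<times>real\<Rightarrow>real) (psit::real\<times>real\<Rightarrow>real) (g::real\<Rightarrow>real) (dg::real\<Rightarrow>real). test_fun T psi \<and> is_partials psi psix psit \<and>
           (\<forall>p. psi p \<ge> 0) \<and>
           (\<forall>y. (g has_real_derivative dg y) (at y)) \<and> continuous_on UNIV dg \<and>
           (\<forall>y. dg y \<ge> 0) \<longrightarrow>
          (LINT p:Q T|lborel. (LBINT s=0..u p. g (phi s)) * psit p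
               - g (v p) * vx p * psix p - dg (v p) * (vx p)\<^sup>2 * psi p) \<ge> 0"
    by (rule tps_dest[OF sol])
  have w1v: "\<And>p. p \<in> V1 T xi \<Longrightarrow> w1 p = v p" using w1v' by blast
  have w2v: "\<And>p. p \<in> V2 T xi \<Longrightarrow> w2 p = v p" using w2v' by blast
  have dxi: "\<And>t. t\<in>{0..T} \<Longrightarrow> (xi has_real_derivative dxi t) (at t within {0..T})" using dxi' by blast
  have dxi_at: "(xi has_real_derivative dxi s) (at s)" if "0 < s" "s < T" for s
  proof -
    have "s \<in> interior {0..T}" using that by simp
    then have "at s within {0..T} = at s" by (rule at_within_interior)
    moreover have "(xi has_real_derivative dxi s) (at s within {0..T})" using that by (intro dxi) simp
    ultimately show ?thesis by simp
  qed
  have xic: "continuous_on {0..T} xi"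
  proof (unfold continuous_on_eq_continuous_within, intro ballI)
    fix t assume "t \<in> {0..T}"
    then show "continuous (at t within {0..T}) xi" by (rule DERIV_continuous[OF dxi])
  qed
  have u_meas: "(\<lambda>p. indicator (Q T) p *\<^sub>R u p) \<in> borel_measurable lborel"
    using uL unfolding Linf_Q_def set_borel_measurable_def by (elim conjE)
  have v_meas: "(\<lambda>p. indicator (Q T) p *\<^sub>R v p) \<in> borel_measurable lborel"
    using reg unfolding weak_regularity_def set_borel_measurable_def by (elim conjE)
  have vx_meas: "(\<lambda>p. indicator (Q T) p *\<^sub>R vx p) \<in> borel_measurable lborel"
    using reg unfolding weak_regularity_def set_borel_measurable_def by (elim conjE)
  have phic: "continuous_on UNIV phi" by (rule cubic_cont[OF phi])

  fix t0 assume t0: "t0 \<in> {t1<..<t2}"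
  then have t0T: "0 < t0" "t0 < T" using t12 by auto
  have dxi_t0: "deriv xi t0 = dxi t0"
    by (rule DERIV_imp_deriv[OF dxi_at[OF t0T]])
  show "deriv xi t0 \<le> 0"
  proof (rule ccontr)
    assume "\<not> deriv xi t0 \<le> 0"
    then have dpos: "dxi t0 > 0" using dxi_t0 by simp
    define x0 where "x0 = xi t0"
    define V where "V = v (x0, t0)"
    define A where "A = phi c"
    define m where "m = (A + V) / 2"
    have VA: "V > A" using above[OF t0] by (simp add: V_def A_def x0_def)
    have mA: "A < m" "m < V" using VA by (auto simp: m_def)
    have limR: "((\<lambda>d. v (x0 + d, t0)) \<longlongrightarrow> V) (at_right 0)"
      and limL: "((\<lambda>d. v (x0 + d, t0)) \<longlongrightarrow> V) (at_left 0)"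
      using lims t0T by (auto simp: V_def x0_def)
    have pathL: "((\<lambda>d. (x0 + d, t0)) \<longlongrightarrow> (x0, t0)) (at_left 0)"
      and pathR: "((\<lambda>d. (x0 + d, t0)) \<longlongrightarrow> (x0, t0)) (at_right 0)"
    proof -
      have "((\<lambda>d. (x0 + d, t0)) \<longlongrightarrow> (x0 + 0, t0)) (at_left 0)"
        "((\<lambda>d. (x0 + d, t0)) \<longlongrightarrow> (x0 + 0, t0)) (at_right 0)"
        by (intro tendsto_Pair tendsto_add tendsto_const tendsto_ident_at)+
      then show "((\<lambda>d. (x0 + d, t0)) \<longlongrightarrow> (x0, t0)) (at_left 0)"
        "((\<lambda>d. (x0 + d, t0)) \<longlongrightarrow> (x0, t0)) (at_right 0)" by simp_all
    qed
    have evL: "eventually (\<lambda>d. (x0 + d, t0) \<in> V1 T xi) (at_left (0::real))"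
    proof -
      have "eventually (\<lambda>x. x \<in> {-1<..<0}) (at_left (0::real))" by (rule eventually_at_left_real) simp
      then show ?thesis by eventually_elim (use t0T in \<open>auto simp: V1_def x0_def\<close>)
    qed
    have evR: "eventually (\<lambda>d. (x0 + d, t0) \<in> V2 T xi) (at_right (0::real))"
    proof -
      have "eventually (\<lambda>x. x \<in> {0<..<1}) (at_right (0::real))" by (rule eventually_at_right_real) simp
      then show ?thesis by eventually_elim (use t0T in \<open>auto simp: V2_def x0_def\<close>)
    qed
    have evL': "eventually (\<lambda>d. (x0 + d, t0) \<in> closure (V1 T xi)) (at_left (0::real))"
      using evL by (rule eventually_mono) (meson closure_subset subsetD)
    have evR': "eventually (\<lambda>d. (x0 + d, t0) \<in> closure (V2 T xi)) (at_right (0::real))"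
      using evR by (rule eventually_mono) (meson closure_subset subsetD)
    have cl1: "(x0, t0) \<in> closure (V1 T xi)"
      by (rule Lim_in_closed_set[OF closed_closure evL' _ pathL]) simp
    have cl2: "(x0, t0) \<in> closure (V2 T xi)"
      by (rule Lim_in_closed_set[OF closed_closure evR' _ pathR]) simp
    have w1V: "w1 (x0, t0) = V"
    proof -
      have "((\<lambda>d. w1 (x0 + d, t0)) \<longlongrightarrow> w1 (x0, t0)) (at_left 0)"
        by (rule continuous_within_tendsto_compose[OF _ _ pathL])
           (use w1c cl1 evL' in \<open>auto simp: continuous_on_eq_continuous_within\<close>)
      moreover have "((\<lambda>d. w1 (x0 + d, t0)) \<longlongrightarrow> V) (at_left 0)"
        by (rule Lim_transform_eventually[OF limL]) (use evL w1v in \<open>auto intro: eventually_mono\<close>)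
      ultimately show ?thesis by (rule tendsto_unique[rotated]) simp
    qed
    have w2V: "w2 (x0, t0) = V"
    proof -
      have "((\<lambda>d. w2 (x0 + d, t0)) \<longlongrightarrow> w2 (x0, t0)) (at_right 0)"
        by (rule continuous_within_tendsto_compose[OF _ _ pathR])
           (use w2c cl2 evR' in \<open>auto simp: continuous_on_eq_continuous_within\<close>)
      moreover have "((\<lambda>d. w2 (x0 + d, t0)) \<longlongrightarrow> V) (at_right 0)"
        by (rule Lim_transform_eventually[OF limR]) (use evR w2v in \<open>auto intro: eventually_mono\<close>)
      ultimately show ?thesis by (rule tendsto_unique[rotated]) simp
    qed
    obtain r1 where r1: "r1 > 0" "\<And>p. p \<in> closure (V1 T xi) \<Longrightarrow> dist p (x0, t0) < r1 \<Longrightarrow> dist (w1 p) V < V - m"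
      using w1c cl1 mA w1V unfolding continuous_on_iff by (metis diff_gt_0_iff_gt)
    obtain r2 where r2: "r2 > 0" "\<And>p. p \<in> closure (V2 T xi) \<Longrightarrow> dist p (x0, t0) < r2 \<Longrightarrow> dist (w2 p) V < V - m"
      using w2c cl2 mA w2V unfolding continuous_on_iff by (metis diff_gt_0_iff_gt)
    define d where "d = min r1 r2 / 4"
    have d0: "d > 0" using r1 r2 by (simp add: d_def)
    have t0in: "t0 \<in> {0..T}" using t0T by simp
    obtain e1 where e1: "e1 > 0" "\<And>s. s \<in> {0..T} \<Longrightarrow> dist s t0 < e1 \<Longrightarrow> dist (dxi s) (dxi t0) < dxi t0"
      using dxic t0in dpos unfolding continuous_on_iff by metis
    obtain e2 where e2: "e2 > 0" "\<And>s. s \<in> {0..T} \<Longrightarrow> dist s t0 < e2 \<Longrightarrow> dist (xi s) (xi t0) < d / 2"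
      using xic t0in d0 unfolding continuous_on_iff by (metis half_gt_zero)
    define Mn where "Mn = min (min e1 e2) (min d (min t0 (T - t0)))"
    have Mn: "0 < Mn" "Mn \<le> e1" "Mn \<le> e2" "Mn \<le> d" "Mn \<le> t0" "Mn \<le> T - t0"
      using e1 e2 d0 t0T by (simp_all add: Mn_def)
    define e where "e = Mn / 2"
    have e0: "e > 0" using Mn by (simp add: e_def)
    have e_le: "e < e1" "e < e2" "e \<le> d / 2" "t0 - e > 0" "t0 + e < T"
      using Mn by (simp_all add: e_def)
    define a1 where "a1 = x0 - d"
    define a2 where "a2 = x0 + d"
    define s1 where "s1 = t0 - e"
    define s2 where "s2 = t0 + e"
    have s12: "0 < s1" "s1 < t0" "t0 < s2" "s2 < T" using e_le e0 by (auto simp: s1_def s2_def)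
    have a12: "a1 < x0" "x0 < a2" using d0 by (auto simp: a1_def a2_def)
    have sT: "0 < s" "s < T" if "s \<in> {s1..s2}" for s using that s12 by auto
    have dxi_pos: "dxi s > 0" if "s \<in> {s1..s2}" for s
    proof -
      have "dist s t0 < e1" using that e_le by (auto simp: s1_def s2_def dist_real_def)
      then have "dist (dxi s) (dxi t0) < dxi t0" using e1(2)[of s] sT[OF that] by auto
      then show ?thesis by (auto simp: dist_real_def)
    qed
    have xi_near: "\<bar>xi s - x0\<bar> < d / 2" if "s \<in> {s1..s2}" for s
    proof -
      have "dist s t0 < e2" using that e_le by (auto simp: s1_def s2_def dist_real_def)
      then have "dist (xi s) (xi t0) < d / 2" using e2(2)[of s] sT[OF that] by auto
      then show ?thesis by (auto simp: dist_real_def x0_def)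
    qed
    have xi_in: "a1 < xi s" "xi s < a2" if "s \<in> {s1..s2}" for s
      using xi_near[OF that] d0 unfolding a1_def a2_def abs_less_iff by linarith+
    have close: "dist (x, s) (x0, t0) < r1" "dist (x, s) (x0, t0) < r2"
      if "\<bar>x - x0\<bar> \<le> d" "s \<in> {s1..s2}" for x s
    proof -
      have "dist (x, s) (x0, t0) \<le> \<bar>dist x x0\<bar> + \<bar>dist s t0\<bar>"
        unfolding dist_Pair_Pair by (rule sqrt_sum_squares_le_sum_abs)
      also have "\<dots> \<le> d + e" using that by (auto simp: dist_real_def s1_def s2_def)
      also have "\<dots> < min r1 r2"
      proof -
        have "d \<le> min r1 r2 / 4" by (simp add: d_def)
        moreover have "min r1 r2 > 0" using r1 r2 by simp
        ultimately show ?thesis using e_le(3) d0 by linarith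
      qed
      finally show "dist (x, s) (x0, t0) < r1" "dist (x, s) (x0, t0) < r2" by auto
    qed
    have inV1: "(x, s) \<in> V1 T xi \<and> v (x, s) > m"
      if "\<bar>x - x0\<bar> \<le> d" "s \<in> {s1..s2}" "x < xi s" for x s
    proof -
      have P: "(x, s) \<in> V1 T xi" using that sT[OF that(2)] by (simp add: V1_def)
      then have "dist (w1 (x, s)) V < V - m"
        using r1(2)[of "(x, s)"] closure_subset close[OF that(1,2)] by auto
      then show ?thesis using P w1v[OF P] by (auto simp: dist_real_def)
    qed
    have inV2: "(x, s) \<in> V2 T xi \<and> v (x, s) > m"
      if "\<bar>x - x0\<bar> \<le> d" "s \<in> {s1..s2}" "x > xi s" for x s
    proof -
      have P: "(x, s) \<in> V2 T xi" using that sT[OF that(2)] by (simp add: V2_def)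
      then have "dist (w2 (x, s)) V < V - m"
        using r2(2)[of "(x, s)"] closure_subset close[OF that(1,2)] by auto
      then show ?thesis using P w2v[OF P] by (auto simp: dist_real_def)
    qed
    have phi_isCont: "\<And>x. isCont phi x" using phic by (simp add: continuous_on_eq_continuous_at)
    define g where "g = (\<lambda>y::real. - (max (m - y) 0)\<^sup>2)"
    define dg where "dg = (\<lambda>y::real. 2 * max (m - y) 0)"
    have gder: "\<And>y. (g has_real_derivative dg y) (at y)" unfolding g_def dg_def by (rule g_deriv)
    have dgc: "continuous_on UNIV dg" unfolding dg_def by (intro continuous_intros)
    have dgnn: "\<And>y. dg y \<ge> 0" by (simp add: dg_def)
    have gzero: "\<And>y. y \<ge> m \<Longrightarrow> g y = 0" by (simp add: g_def)
    have dgzero: "\<And>y. y \<ge> m \<Longrightarrow> dg y = 0" by (simp add: dg_def)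
    have gc: "continuous_on UNIV g" unfolding g_def by (intro continuous_intros)
    have gphic: "continuous_on UNIV (\<lambda>s. g (phi s))"
      by (rule continuous_on_compose2[OF gc phic]) auto
    define G where "G = (\<lambda>w::real. LBINT s=0..w. g (phi s))"
    have Gc: "continuous_on UNIV G" unfolding G_def by (rule LB_cont[OF gphic])
    have G0: "G 0 = 0" by (simp add: G_def zero_ereal_def)
    obtain rr where rr: "c \<le> rr" "phi rr = m"
    proof -
      obtain M where M: "M \<ge> c" "phi M \<ge> m" using cubic_large[OF phi] by blast
      have "\<exists>x. c \<le> x \<and> x \<le> M \<and> phi x = m"
        by (rule IVT) (use M mA phi_isCont in \<open>auto simp: A_def\<close>)
      then show ?thesis using that by blast
    qed
    have bc: "b < c" by (rule cubic_props(1)[OF phi])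
    have crr: "c < rr" using rr mA by (cases "c = rr") (auto simp: A_def)
    have GL: "G w = G b" if "b \<le> w" "w \<le> c" "phi w > m" for w
    proof -
      have "G w = G b + (LBINT s=b..w. g (phi s))" unfolding G_def by (rule LB_split[OF gphic])
      moreover have "(LBINT s=b..w. g (phi s)) = 0"
      proof (rule LB_zero)
        fix s assume "min b w \<le> s" "s \<le> max b w"
        then have s: "b \<le> s" "s \<le> w" using that by auto
        have "phi s \<ge> phi w" using cubic_props(2)[OF phi, of s w] s that by (cases "s = w") auto
        then show "g (phi s) = 0" using that by (intro gzero) simp
      qed
      ultimately show ?thesis by simp
    qed
    have GR: "G w = G rr" if "c \<le> w" "phi w > m" for w
    proof -
      have rw: "rr \<le> w"
      proof (rule ccontr)
        assume "\<not> rr \<le> w" then have "w < rr" by simp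
        then have "phi w < phi rr" using cubic_props(3)[OF phi, of w rr] that by simp
        then show False using that rr by simp
      qed
      have "G w = G rr + (LBINT s=rr..w. g (phi s))" unfolding G_def by (rule LB_split[OF gphic])
      moreover have "(LBINT s=rr..w. g (phi s)) = 0"
      proof (rule LB_zero)
        fix s assume "min rr w \<le> s" "s \<le> max rr w"
        then have s: "rr \<le> s" using rw by auto
        have "phi s \<ge> phi rr" using cubic_props(3)[OF phi, of rr s] s rr(1) by (cases "s = rr") auto
        then show "g (phi s) = 0" using rr by (intro gzero) simp
      qed
      ultimately show ?thesis by simp
    qed
    define D where "D = G rr - G b"
    have D_eq: "D = (LBINT s=b..rr. g (phi s))"
      using LB_split[OF gphic, where a=b and w=rr] unfolding D_def G_def by simp
    have Dneg: "D < 0"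
    proof -
      have cont1: "continuous_on {b..rr} (\<lambda>s. g (phi s))"
        by (rule continuous_on_subset[OF gphic]) simp
      have cont': "continuous_on {b..rr} (\<lambda>s. - g (phi s))"
        by (intro continuous_on_minus cont1)
      have int: "set_integrable lborel {b..rr} (\<lambda>s. g (phi s))"
        by (rule borel_integrable_atLeastAtMost'[OF cont1])
      have DI: "D = integral {b..rr} (\<lambda>s. g (phi s))"
        using D_eq interval_integral_eq_integral[OF _ int] bc crr by simp
      have nn: "\<And>s. s \<in> {b..rr} \<Longrightarrow> 0 \<le> - g (phi s)" by (simp add: g_def)
      have I1: "integral {b..rr} (\<lambda>s. - g (phi s)) \<ge> 0"
        by (rule integral_nonneg[OF integrable_continuous_interval[OF cont'] nn])
      have I2: "integral {b..rr} (\<lambda>s. - g (phi s)) \<noteq> 0"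
      proof
        assume "integral {b..rr} (\<lambda>s. - g (phi s)) = 0"
        then have "\<forall>x\<in>{b..rr}. - g (phi x) = 0" using integral_eq_0_iff[OF cont' _ nn] bc crr by simp
        moreover have "c \<in> {b..rr}" using bc crr by simp
        ultimately have "g (phi c) = 0" by auto
        moreover have "g (phi c) < 0" using mA by (simp add: g_def A_def)
        ultimately show False by simp
      qed
      from I1 I2 have "integral {b..rr} (\<lambda>s. - g (phi s)) > 0" by simp
      then show ?thesis using DI by simp
    qed

    define al where "al = bump a1 a2"
    define be where "be = bump s1 s2"
    define psi where "psi = (\<lambda>p::real\<times>real. al (fst p) * be (snd p))"
    define psix where "psix = (\<lambda>p::real\<times>real. deriv al (fst p) * be (snd p))"
    define psit where "psit = (\<lambda>p::real\<times>real. al (fst p) * deriv be (snd p))"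
    have tf: "test_fun T psi" unfolding psi_def al_def be_def by (rule test_fun_prod) (use s12 in auto)
    have pp: "is_partials psi psix psit" unfolding psi_def psix_def psit_def al_def be_def by (rule partials_prod)
    have psinn: "\<forall>p. psi p \<ge> 0" by (simp add: psi_def al_def be_def bump_nonneg)
    have E0: "(LINT p:Q T|lborel. (LBINT s=0..u p. g (phi s)) * psit p
               - g (v p) * vx p * psix p - dg (v p) * (vx p)\<^sup>2 * psi p) \<ge> 0"
      by (rule ent[rule_format]) (simp add: tf pp psinn gder dgc dgnn)
    define Fint where "Fint = (\<lambda>p. indicator (Q T) p *\<^sub>R (G (u p) * psit p - g (v p) * vx p * psix p - dg (v p) * (vx p)\<^sup>2 * psi p))"
    have E: "0 \<le> integral\<^sup>L lborel Fint"
      using E0 unfolding set_lebesgue_integral_def Fint_def G_def by simp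

    have alc: "continuous_on UNIV al" unfolding al_def by (rule smooth1_cont[OF smooth_bump])
    have bec: "continuous_on UNIV be" unfolding be_def by (rule smooth1_cont[OF smooth_bump])
    have dalc: "continuous_on UNIV (deriv al)" unfolding al_def by (rule smooth1_cont[OF smooth1_deriv[OF smooth_bump]])
    have dbec: "continuous_on UNIV (deriv be)" unfolding be_def by (rule smooth1_cont[OF smooth1_deriv[OF smooth_bump]])
    have al_zero: "al x = 0 \<and> deriv al x = 0" if "x \<notin> {a1<..<a2}" for x
      using that unfolding al_def by (auto intro!: bump_zero deriv_bump_zero)
    have be_zero: "be s = 0 \<and> deriv be s = 0" if "s \<notin> {s1<..<s2}" for s
      using that unfolding be_def by (auto intro!: bump_zero deriv_bump_zero)
    have psic: "continuous_on UNIV psi" unfolding psi_def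
      by (intro continuous_on_mult cont_fst_comp cont_snd_comp alc bec)
    have psixc: "continuous_on UNIV psix" unfolding psix_def
      by (intro continuous_on_mult cont_fst_comp cont_snd_comp dalc bec)
    have psitc: "continuous_on UNIV psit" unfolding psit_def
      by (intro continuous_on_mult cont_fst_comp cont_snd_comp alc dbec)
    have psi_m: "psi \<in> borel_measurable lborel" using borel_measurable_continuous_onI[OF psic] by simp
    have psix_m: "psix \<in> borel_measurable lborel" using borel_measurable_continuous_onI[OF psixc] by simp
    have psit_m: "psit \<in> borel_measurable lborel" using borel_measurable_continuous_onI[OF psitc] by simp

    define xc where "xc = (\<lambda>s. xi (max s1 (min s2 s)))"
    have clamp: "\<And>s. max s1 (min s2 s) \<in> {s1..s2}" using s12 by auto
    have xi_sub: "continuous_on {s1..s2} xi" by (rule continuous_on_subset[OF xic]) (use s12 in auto)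
    have xcc: "continuous_on UNIV xc"
    proof -
      have "continuous_on UNIV (\<lambda>s. max s1 (min s2 s))" by (intro continuous_intros)
      then show ?thesis unfolding xc_def
        by (rule continuous_on_compose2[OF xi_sub]) (use clamp in auto)
    qed
    have xc_eq: "\<And>s. s \<in> {s1..s2} \<Longrightarrow> xc s = xi s" by (simp add: xc_def)
    have xc_in: "\<And>s. a1 < xc s \<and> xc s < a2" using xi_in clamp by (simp add: xc_def)
    have Znull: "{p::real\<times>real. fst p = xc (snd p)} \<in> null_sets lborel" by (rule graph_null[OF xcc])
    define S where "S = {p::real\<times>real. xc (snd p) < fst p}"
    have Sopen: "open S" unfolding S_def
      by (intro open_Collect_less cont_snd_comp xcc continuous_intros)
    have Ssets: "S \<in> sets lborel" using Sopen by simp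
    define H where "H = (\<lambda>p. (G b + D * indicator S p) * psit p)"

    have AEeq: "AE p in lborel. Fint p = H p"
      using ph1 ph2 AE_not_in[OF Znull]
    proof eventually_elim
      case (elim p)
      obtain x s where p: "p = (x, s)" by (cases p)
      show ?case
      proof (cases "a1 < x \<and> x < a2 \<and> s1 < s \<and> s < s2")
        case False
        then have z: "psi p = 0" "psix p = 0" "psit p = 0"
          using al_zero[of x] be_zero[of s] unfolding p psi_def psix_def psit_def by auto
        show ?thesis unfolding Fint_def H_def z by simp
      next
        case True
        have sI: "s \<in> {s1..s2}" using True by auto
        have pQ: "p \<in> Q T" using sT[OF sI] by (simp add: p Q_def)
        have xne: "x \<noteq> xi s" using elim(3) xc_eq[OF sI] by (simp add: p)
        have xd: "\<bar>x - x0\<bar> \<le> d" using True by (auto simp: a1_def a2_def)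
        show ?thesis
        proof (cases "x < xi s")
          case True
          from inV1[OF xd sI True] have inV: "p \<in> V1 T xi" and vm: "v p > m" by (simp_all add: p)
          from elim(1) inV have vr: "v p \<in> {phi c..phi b}" and up: "u p = beta0 phi b c (v p)" by auto
          from beta0_prop[OF phi vr] up have ub: "u p \<in> {b..c}" "phi (u p) = v p" by auto
          have Gu: "G (u p) = G b" using GL[of "u p"] ub vm by auto
          have nS: "p \<notin> S" using True xc_eq[OF sI] by (simp add: S_def p)
          show ?thesis unfolding Fint_def H_def using pQ Gu nS gzero[of "v p"] dgzero[of "v p"] vm by simp
        next
          case False
          with xne have gt: "x > xi s" by simp
          from inV2[OF xd sI gt] have inV: "p \<in> V2 T xi" and vm: "v p > m" by (simp_all add: p)
          from elim(2) inV have vr: "v p \<ge> phi c" and up: "u p = beta2 phi c (v p)" by auto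
          from beta2_prop[OF phi vr] up have ub: "u p \<ge> c" "phi (u p) = v p" by auto
          have Gu: "G (u p) = G rr" using GR[of "u p"] ub vm by auto
          have inS: "p \<in> S" using gt xc_eq[OF sI] by (simp add: S_def p)
          show ?thesis unfolding Fint_def H_def using pQ Gu inS gzero[of "v p"] dgzero[of "v p"] vm
            by (simp add: D_def)
        qed
      qed
    qed
    have Fint_alt: "Fint = (\<lambda>p. G (indicator (Q T) p *\<^sub>R u p) * psit p
        - g (indicator (Q T) p *\<^sub>R v p) * (indicator (Q T) p *\<^sub>R vx p) * psix p
        - dg (indicator (Q T) p *\<^sub>R v p) * (indicator (Q T) p *\<^sub>R vx p)\<^sup>2 * psi p)"
    proof
      fix p
      show "Fint p = G (indicator (Q T) p *\<^sub>R u p) * psit p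
        - g (indicator (Q T) p *\<^sub>R v p) * (indicator (Q T) p *\<^sub>R vx p) * psix p
        - dg (indicator (Q T) p *\<^sub>R v p) * (indicator (Q T) p *\<^sub>R vx p)\<^sup>2 * psi p"
        by (cases "p \<in> Q T") (simp_all add: Fint_def G0)
    qed
    have Fint_meas: "Fint \<in> borel_measurable lborel"
      unfolding Fint_alt
      by (intro borel_measurable_diff borel_measurable_times borel_measurable_power
          borel_measurable_continuous_on[OF Gc] borel_measurable_continuous_on[OF gc]
          borel_measurable_continuous_on[OF dgc] u_meas v_meas vx_meas psi_m psix_m psit_m)
    have H_meas: "H \<in> borel_measurable lborel"
      unfolding H_def
      by (intro borel_measurable_times borel_measurable_add borel_measurable_const
          borel_measurable_indicator Ssets psit_m)
    have "integral\<^sup>L lborel Fint = integral\<^sup>L lborel H"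
      by (rule integral_cong_AE[OF Fint_meas H_meas AEeq])
    with E have H0: "0 \<le> integral\<^sup>L lborel H" by simp

    have psit_int: "integrable lborel psit"
    proof (rule integrable_cont_compact[OF psitc])
      show "compact ({a1..a2} \<times> {s1..s2})" by (intro compact_Times) auto
      fix p assume "p \<notin> {a1..a2} \<times> {s1..s2}"
      then show "psit p = 0" using al_zero[of "fst p"] be_zero[of "snd p"]
        by (cases p) (auto simp: psit_def)
    qed
    have H_alt: "H = (\<lambda>p. G b * psit p + D * (indicator S p *\<^sub>R psit p))"
      unfolding H_def by (auto simp: algebra_simps)
    have H_int: "integrable lborel H"
      unfolding H_alt using integrable_mult_indicator[OF Ssets psit_int] psit_int by auto
    have fub: "integral\<^sup>L lborel H = (\<integral>s. (\<integral>x. H (x, s) \<partial>lborel) \<partial>lborel)"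
      by (rule fubini_lborel[OF H_int])

    define Ja where "Ja = integral\<^sup>L lborel al"
    define K where "K = (\<lambda>y::real. LBINT x=a1..y. al x)"
    have al_int: "integrable lborel al"
      by (rule integrable_cont_compact[OF alc compact_Icc[of a1 a2]]) (use al_zero in auto)
    have Jy: "(\<integral>x. indicator {y<..} x *\<^sub>R al x \<partial>lborel) = Ja - K y" if "a1 \<le> y" "y \<le> a2" for y
    proof -
      have spl: "al x = indicator {a1..y} x *\<^sub>R al x + indicator {y<..} x *\<^sub>R al x" for x
      proof (cases "x \<le> a1")
        case True
        then have "al x = 0" using al_zero[of x] by auto
        then show ?thesis by simp
      next
        case False
        then show ?thesis by (cases "x \<le> y") (auto simp: indicator_def)
      qed
      have i1: "integrable lborel (\<lambda>x. indicator {a1..y} x *\<^sub>R al x)"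
        by (intro integrable_mult_indicator al_int) simp
      have i2: "integrable lborel (\<lambda>x. indicator {y<..} x *\<^sub>R al x)"
        by (intro integrable_mult_indicator al_int) simp
      have "Ja = (\<integral>x. indicator {a1..y} x *\<^sub>R al x + indicator {y<..} x *\<^sub>R al x \<partial>lborel)"
        unfolding Ja_def using spl by (metis (no_types, lifting))
      also have "\<dots> = (\<integral>x. indicator {a1..y} x *\<^sub>R al x \<partial>lborel) + (\<integral>x. indicator {y<..} x *\<^sub>R al x \<partial>lborel)"
        by (rule Bochner_Integration.integral_add[OF i1 i2])
      also have "(\<integral>x. indicator {a1..y} x *\<^sub>R al x \<partial>lborel) = K y"
        unfolding K_def using interval_integral_Icc[OF that(1), of al]
        by (simp add: set_lebesgue_integral_def)
      finally show ?thesis by simp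
    qed
    have inner: "(\<integral>x. H (x, s) \<partial>lborel) = deriv be s * ((G b + D) * Ja - D * K (xc s))" for s
    proof -
      have "(\<lambda>x. H (x, s)) = (\<lambda>x. deriv be s * (G b * al x + D * (indicator {xc s<..} x *\<^sub>R al x)))"
        by (auto simp: H_def psit_def S_def indicator_def algebra_simps)
      then have "(\<integral>x. H (x, s) \<partial>lborel) = deriv be s * (G b * Ja + D * (\<integral>x. indicator {xc s<..} x *\<^sub>R al x \<partial>lborel))"
      proof -
        have i: "integrable lborel (\<lambda>x. indicator {xc s<..} x *\<^sub>R al x)"
          by (intro integrable_mult_indicator al_int) simp
        have "(\<integral>x. G b * al x + D * (indicator {xc s<..} x *\<^sub>R al x) \<partial>lborel)
            = G b * Ja + D * (\<integral>x. indicator {xc s<..} x *\<^sub>R al x \<partial>lborel)"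
          using Bochner_Integration.integral_add[OF integrable_mult_right[OF al_int] integrable_mult_right[OF i]]
          by (simp add: Ja_def)
        then show ?thesis using \<open>(\<lambda>x. H (x, s)) = _\<close> by simp
      qed
      also have "(\<integral>x. indicator {xc s<..} x *\<^sub>R al x \<partial>lborel) = Ja - K (xc s)"
        using xc_in[of s] by (intro Jy) auto
      finally show ?thesis by (simp add: algebra_simps)
    qed

    have Kder: "(K has_vector_derivative al y) (at y within {a1..a2})" if "a1 \<le> y" "y \<le> a2" for y
      unfolding K_def by (rule interval_integral_FTC2) (use that a12 in \<open>auto intro: continuous_on_subset[OF alc]\<close>)
    have Kc: "continuous_on {a1..a2} K"
    proof (unfold continuous_on_eq_continuous_within, intro ballI)
      fix y assume "y \<in> {a1..a2}"
      then show "continuous (at y within {a1..a2}) K"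
        by (intro has_vector_derivative_continuous[OF Kder]) auto
    qed
    have Kxcc: "continuous_on UNIV (\<lambda>s. K (xc s))"
    proof (rule continuous_on_compose2[OF Kc xcc])
      show "xc ` UNIV \<subseteq> {a1..a2}"
      proof
        fix y assume "y \<in> xc ` UNIV"
        then obtain s where "y = xc s" by auto
        then show "y \<in> {a1..a2}" using xc_in[of s] by auto
      qed
    qed
    have Kat: "(K has_real_derivative al y) (at y)" if "a1 < y" "y < a2" for y
    proof -
      have "(K has_vector_derivative al y) (at y within {a1..a2})" using that by (intro Kder) auto
      moreover have "at y within {a1..a2} = at y" using that by (intro at_within_interior) simp
      ultimately show ?thesis by (simp add: has_real_derivative_iff_has_vector_derivative)
    qed
    have dbe_int: "integrable lborel (deriv be)"
      by (rule integrable_cont_compact[OF dbec compact_Icc[of s1 s2]]) (use be_zero in auto)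
    have dbeK_int: "integrable lborel (\<lambda>s. deriv be s * K (xc s))"
      by (rule integrable_cont_compact[OF continuous_on_mult[OF dbec Kxcc] compact_Icc[of s1 s2]]) (use be_zero in auto)
    have outer: "(\<integral>s. deriv be s * ((G b + D) * Ja - D * K (xc s)) \<partial>lborel)
        = (G b + D) * Ja * (\<integral>s. deriv be s \<partial>lborel) - D * (\<integral>s. deriv be s * K (xc s) \<partial>lborel)"
    proof -
      have "(\<lambda>s. deriv be s * ((G b + D) * Ja - D * K (xc s))) = (\<lambda>s. (G b + D) * Ja * deriv be s - D * (deriv be s * K (xc s)))"
        by (auto simp: algebra_simps)
      then show ?thesis using dbe_int dbeK_int by simp
    qed
    have bes: "be s1 = 0" "be s2 = 0" by (simp_all add: be_def bump_zero)
    have bed: "(be has_real_derivative deriv be s) (at s)" for s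
      unfolding be_def by (rule smooth1_D[OF smooth_bump])
    have int_dbe: "(\<integral>s. deriv be s \<partial>lborel) = 0"
    proof -
      have "(\<integral>s. deriv be s \<partial>lborel) = (LBINT s=s1..s2. deriv be s)"
        by (rule integral_eq_LBINT) (use s12 be_zero in auto)
      also have "\<dots> = be s2 - be s1"
      proof (rule interval_integral_FTC_finite)
        show "continuous_on {min s1 s2..max s1 s2} (deriv be)" by (rule continuous_on_subset[OF dbec]) simp
        fix x show "(be has_vector_derivative deriv be x) (at x within {min s1 s2..max s1 s2})"
          using bed[of x] by (simp add: has_real_derivative_iff_has_vector_derivative has_vector_derivative_at_within)
      qed
      finally show ?thesis using bes by simp
    qed
    define P where "P = (LBINT s=s1..s2. be s * (al (xi s) * dxi s))"
    have Kxic: "continuous_on {s1..s2} (\<lambda>s. K (xi s))"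
    proof (rule continuous_on_compose2[OF Kc xi_sub])
      show "xi ` {s1..s2} \<subseteq> {a1..a2}"
      proof
        fix y assume "y \<in> xi ` {s1..s2}"
        then obtain s where "s \<in> {s1..s2}" "y = xi s" by auto
        then show "y \<in> {a1..a2}" using xi_in[of s] by auto
      qed
    qed
    have alxic: "continuous_on {s1..s2} (\<lambda>s. al (xi s))"
      by (rule continuous_on_compose2[OF alc xi_sub]) auto
    have dxic': "continuous_on {s1..s2} dxi" by (rule continuous_on_subset[OF dxic]) (use s12 in auto)
    have c1: "continuous_on {s1..s2} (\<lambda>s. deriv be s * K (xi s))"
      by (intro continuous_on_mult continuous_on_subset[OF dbec] Kxic) simp
    have c2: "continuous_on {s1..s2} (\<lambda>s. be s * (al (xi s) * dxi s))"
      by (intro continuous_on_mult continuous_on_subset[OF bec] alxic dxic') simp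
    have int_K: "(\<integral>s. deriv be s * K (xc s) \<partial>lborel) = - P"
    proof -
      have "(\<integral>s. deriv be s * K (xc s) \<partial>lborel) = (LBINT s=s1..s2. deriv be s * K (xc s))"
        by (rule integral_eq_LBINT) (use s12 be_zero in auto)
      also have "\<dots> = (LBINT s=s1..s2. deriv be s * K (xi s))"
        by (rule interval_integral_cong) (use s12 xc_eq in \<open>auto simp: einterval_def\<close>)
      also have "\<dots> = - P"
      proof -
        have FTC: "(LBINT s=s1..s2. deriv be s * K (xi s) + be s * (al (xi s) * dxi s)) = be s2 * K (xi s2) - be s1 * K (xi s1)"
        proof (rule interval_integral_FTC_finite)
          show "continuous_on {min s1 s2..max s1 s2} (\<lambda>s. deriv be s * K (xi s) + be s * (al (xi s) * dxi s))"
            using c1 c2 s12 by (simp add: continuous_on_add)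
          fix s assume s: "min s1 s2 \<le> s" "s \<le> max s1 s2"
          then have sI: "s \<in> {s1..s2}" using s12 by simp
          have "((\<lambda>s. K (xi s)) has_real_derivative al (xi s) * dxi s) (at s)"
            by (rule DERIV_chain2[OF Kat dxi_at]) (use xi_in[OF sI] sT[OF sI] in auto)
          from DERIV_mult[OF bed this]
          have "((\<lambda>s. be s * K (xi s)) has_real_derivative deriv be s * K (xi s) + be s * (al (xi s) * dxi s)) (at s)"
            by (rule DERIV_cong) (simp add: algebra_simps)
          then show "((\<lambda>s. be s * K (xi s)) has_vector_derivative deriv be s * K (xi s) + be s * (al (xi s) * dxi s))
              (at s within {min s1 s2..max s1 s2})"
            by (simp add: has_real_derivative_iff_has_vector_derivative has_vector_derivative_at_within)
        qed
        have i1: "interval_lebesgue_integrable lborel s1 s2 (\<lambda>s. deriv be s * K (xi s))"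
          by (rule interval_integrable_continuous_on[OF _ c1]) (use s12 in auto)
        have i2: "interval_lebesgue_integrable lborel s1 s2 (\<lambda>s. be s * (al (xi s) * dxi s))"
          by (rule interval_integrable_continuous_on[OF _ c2]) (use s12 in auto)
        have "(LBINT s=s1..s2. deriv be s * K (xi s)) + P = 0"
          using FTC interval_lebesgue_integral_add(2)[OF i1 i2] bes by (simp add: P_def)
        then show ?thesis by simp
      qed
      finally show ?thesis .
    qed
    have HDP: "integral\<^sup>L lborel H = D * P"
      using fub inner outer int_dbe int_K by simp
    have Ppos: "P > 0"
    proof -
      have int: "set_integrable lborel {s1..s2} (\<lambda>s. be s * (al (xi s) * dxi s))"
        by (rule borel_integrable_atLeastAtMost'[OF c2])
      have PI: "P = integral {s1..s2} (\<lambda>s. be s * (al (xi s) * dxi s))"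
        unfolding P_def using interval_integral_eq_integral[OF _ int] s12 by simp
      have nn: "\<And>s. s \<in> {s1..s2} \<Longrightarrow> 0 \<le> be s * (al (xi s) * dxi s)"
        using dxi_pos by (auto simp: al_def be_def bump_nonneg less_imp_le)
      have I1: "integral {s1..s2} (\<lambda>s. be s * (al (xi s) * dxi s)) \<ge> 0"
        by (rule integral_nonneg[OF integrable_continuous_interval[OF c2] nn])
      have I2: "integral {s1..s2} (\<lambda>s. be s * (al (xi s) * dxi s)) \<noteq> 0"
      proof
        assume "integral {s1..s2} (\<lambda>s. be s * (al (xi s) * dxi s)) = 0"
        then have "\<forall>x\<in>{s1..s2}. be x * (al (xi x) * dxi x) = 0"
          using integral_eq_0_iff[OF c2 _ nn] s12 by simp
        moreover have "t0 \<in> {s1..s2}" using s12 by simp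
        ultimately have "be t0 * (al (xi t0) * dxi t0) = 0" by auto
        moreover have "be t0 > 0" unfolding be_def using s12 by (intro bump_pos) auto
        moreover have "al (xi t0) > 0" unfolding al_def x0_def[symmetric] using a12 by (intro bump_pos) auto
        ultimately show False using dpos by simp
      qed
      from I1 I2 PI show ?thesis by simp
    qed
    have "D * P < 0" using Dneg Ppos by (simp add: mult_neg_pos)
    then show False using H0 HDP by simp
  qed
qed

end
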